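(* Consider EF-BV with $R$ proper closed convex and $f$ $L$-smooth. For every $t\ge0$, with $u^{t+1}=\frac1\gamma(x^t-x^{t+1})-g^{t+1}$ (which belongs to $\partial R(x^{t+1})$), $$f(x^{t+1})+R(x^{t+1})\le f(x^t)+R(x^t)+\frac\gamma2\|\nabla f(x^t)-g^{t+1}\|^2+\Big(\frac L2-\frac1{2\gamma}+\frac{\gamma L^2}{2}\Big)\|x^{t+1}-x^t\|^2-\frac\gamma4\|\nabla f(x^{t+1})+u^{t+1}\|^2 .$$
   Context: $f:\mathbb{R}^d\to\mathbb{R}$ is differentiable with $L$-Lipschitz gradient; $R:\mathbb{R}^d\to\mathbb{R}\cup\{+\infty\}$ proper closed convex, $\mathrm{prox}_{\gamma R}(x)=\arg\min_y(\gamma R(y)+\frac12\|x-y\|^2)$, $\gamma>0$. In EF-BV the iterates satisfy $x^{t+1}=\mathrm{prox}_{\gamma R}(x^t-\gamma g^{t+1})$, where $g^{t+1}\in\mathbb{R}^d$ is the (arbitrary, possibly random) gradient estimate computed at iteration $t$; the inequality holds pointwise for any such $x^t$, $g^{t+1}$, $x^{t+1}$ with $x^t$ in the domain of $R$. *)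

theory Defs
  imports "HOL-Analysis.Analysis" "HOL-Library.Extended_Real"
begin

definition epigraph_e :: "('a::real_vector \<Rightarrow> ereal) \<Rightarrow> ('a \<times> real) set" where
  "epigraph_e R = {(x, r). R x \<le> ereal r}"

definition proper_fun :: "('a \<Rightarrow> ereal) \<Rightarrow> bool" where
  "proper_fun R \<longleftrightarrow> (\<forall>x. R x \<noteq> -\<infinity>) \<and> (\<exists>x. R x \<noteq> \<infinity>)"

definition closed_fun :: "('a::real_normed_vector \<Rightarrow> ereal) \<Rightarrow> bool" where
  "closed_fun R \<longleftrightarrow> closed (epigraph_e R)"

definition convex_fun :: "('a::real_vector \<Rightarrow> ereal) \<Rightarrow> bool" where
  "convex_fun R \<longleftrightarrow> convex (epigraph_e R)"

definition is_prox :: "real \<Rightarrow> ('a::real_normed_vector \<Rightarrow> ereal) \<Rightarrow> 'a \<Rightarrow> 'a \<Rightarrow> bool" where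
  "is_prox \<gamma> R x p \<longleftrightarrow>
     (\<forall>y. ereal \<gamma> * R p + ereal ((norm (x - p))\<^sup>2 / 2) \<le> ereal \<gamma> * R y + ereal ((norm (x - y))\<^sup>2 / 2))"

end

theory Submission
  imports Defs
begin

lemma descent:
  fixes f :: "'a::euclidean_space \<Rightarrow> real" and grad :: "'a \<Rightarrow> 'a"
  assumes grad: "\<And>x. (f has_derivative (\<lambda>h. grad x \<bullet> h)) (at x)"
    and Lip: "\<And>x y. norm (grad x - grad y) \<le> L * norm (x - y)"
  shows "f y \<le> f x + grad x \<bullet> (y - x) + L / 2 * (norm (y - x))\<^sup>2"
proof -
  define d where "d = y - x"
  define \<phi> where "\<phi> s = f (x + s *\<^sub>R d) - s * (grad x \<bullet> d) - L * s\<^sup>2 / 2 * (norm d)\<^sup>2" for s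
  have "\<phi> 1 \<le> \<phi> 0"
  proof (rule DERIV_nonpos_imp_nonincreasing[of 0 1])
    fix s :: real assume s: "0 \<le> s" "s \<le> 1"
    have h1: "((\<lambda>s. x + s *\<^sub>R d) has_derivative (\<lambda>h. h *\<^sub>R d)) (at s)"
      by (auto intro!: derivative_eq_intros)
    have h2: "((\<lambda>s. f (x + s *\<^sub>R d)) has_derivative (\<lambda>h. grad (x + s *\<^sub>R d) \<bullet> (h *\<^sub>R d))) (at s)"
      using has_derivative_compose[OF h1 grad] by (simp add: o_def)
    have h3: "((\<lambda>s. f (x + s *\<^sub>R d)) has_real_derivative (grad (x + s *\<^sub>R d) \<bullet> d)) (at s)"
      unfolding has_field_derivative_def using h2 by (simp add: mult.commute[of _ "grad _ \<bullet> d"])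
    have D: "(\<phi> has_real_derivative (grad (x + s *\<^sub>R d) \<bullet> d - grad x \<bullet> d - L * s * (norm d)\<^sup>2)) (at s)"
      unfolding \<phi>_def
      by (rule h3 derivative_eq_intros refl | simp)+
    have "grad (x + s *\<^sub>R d) \<bullet> d - grad x \<bullet> d = (grad (x + s *\<^sub>R d) - grad x) \<bullet> d"
      by (simp add: inner_diff_left)
    also have "\<dots> \<le> norm (grad (x + s *\<^sub>R d) - grad x) * norm d"
      by (rule norm_cauchy_schwarz)
    also have "\<dots> \<le> L * norm (s *\<^sub>R d) * norm d"
      using Lip[of "x + s *\<^sub>R d" x] by (simp add: mult_right_mono)
    also have "\<dots> = L * s * (norm d)\<^sup>2" using s by (simp add: power2_eq_square)
    finally show "\<exists>y. (\<phi> has_real_derivative y) (at s) \<and> y \<le> 0" using D by auto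
  qed simp
  thus ?thesis unfolding \<phi>_def d_def by (simp add: algebra_simps)
qed

lemma le_of_le_eps:
  fixes A B c :: real
  assumes "\<And>t. 0 < t \<Longrightarrow> t \<le> 1 \<Longrightarrow> A \<le> B + t * c" and "c \<ge> 0"
  shows "A \<le> B"
proof (rule ccontr)
  assume "\<not> A \<le> B"
  hence pos: "A - B > 0" by simp
  define t where "t = min 1 ((A - B) / (2 * (c + 1)))"
  have t: "0 < t" "t \<le> 1" using pos assms(2) by (auto simp: t_def)
  have "t * c \<le> (A - B) / (2 * (c + 1)) * c"
    using assms(2) by (intro mult_right_mono) (auto simp: t_def)
  also have "\<dots> < A - B"
  proof -
    have "(A - B) / (2 * (c + 1)) * c = (A - B) * (c / (2 * (c + 1)))" by simp
    also have "\<dots> < (A - B) * 1"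
      using pos assms(2) by (intro mult_strict_left_mono) (auto simp: divide_simps)
    finally show ?thesis by simp
  qed
  finally show False using assms(1)[OF t] by linarith
qed

theorem mainTheorem14:
  fixes f :: "'a::euclidean_space \<Rightarrow> real" and grad :: "'a \<Rightarrow> 'a"
    and R :: "'a \<Rightarrow> ereal" and L \<gamma> :: real and xt g xt1 :: 'a
  assumes grad: "\<And>x. (f has_derivative (\<lambda>h. grad x \<bullet> h)) (at x)"
    and Lip: "\<And>x y. norm (grad x - grad y) \<le> L * norm (x - y)"
    and proper: "proper_fun R" and closedR: "closed_fun R" and convR: "convex_fun R"
    and gamma: "\<gamma> > 0"
    and dom: "R xt \<noteq> \<infinity>"
    and step: "is_prox \<gamma> R (xt - \<gamma> *\<^sub>R g) xt1"
  shows "f xt1 + real_of_ereal (R xt1)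
      \<le> f xt + real_of_ereal (R xt) + \<gamma> / 2 * (norm (grad xt - g))\<^sup>2
        + (L / 2 - 1 / (2 * \<gamma>) + \<gamma> * L\<^sup>2 / 2) * (norm (xt1 - xt))\<^sup>2
        - \<gamma> / 4 * (norm (grad xt1 + ((1 / \<gamma>) *\<^sub>R (xt - xt1) - g)))\<^sup>2"
proof -
  define z where "z = xt - \<gamma> *\<^sub>R g"
  define d where "d = xt1 - xt"
  have pr: "\<And>y. ereal \<gamma> * R xt1 + ereal ((norm (z - xt1))\<^sup>2 / 2) \<le> ereal \<gamma> * R y + ereal ((norm (z - y))\<^sup>2 / 2)"
    using step unfolding is_prox_def z_def by blast
  obtain r where r: "R xt = ereal r"
    using dom proper unfolding proper_fun_def by (cases "R xt") auto
  have "R xt1 \<noteq> \<infinity>"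
  proof
    assume "R xt1 = \<infinity>"
    with pr[of xt] r gamma show False by simp
  qed
  then obtain rp where rp: "R xt1 = ereal rp"
    using proper unfolding proper_fun_def by (cases "R xt1") auto
  have key: "\<gamma> * rp \<le> \<gamma> * r + (z - xt1) \<bullet> d"
  proof (rule le_of_le_eps[where c = "(norm d)\<^sup>2 / 2"])
    fix t :: real assume t: "0 < t" "t \<le> 1"
    define y where "y = (1 - t) *\<^sub>R xt1 + t *\<^sub>R xt"
    have "(y, (1 - t) * rp + t * r) \<in> epigraph_e R"
    proof -
      have "(xt1, rp) \<in> epigraph_e R" "(xt, r) \<in> epigraph_e R"
        using rp r by (auto simp: epigraph_e_def)
      from convexD[OF convR[unfolded convex_fun_def] this, of "1 - t" t] t
      show ?thesis by (simp add: y_def)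
    qed
    hence Ry: "R y \<le> ereal ((1 - t) * rp + t * r)" by (simp add: epigraph_e_def)
    have "ereal (\<gamma> * rp + (norm (z - xt1))\<^sup>2 / 2) \<le> ereal \<gamma> * R y + ereal ((norm (z - y))\<^sup>2 / 2)"
      using pr[of y] rp by simp
    also have "\<dots> \<le> ereal \<gamma> * ereal ((1 - t) * rp + t * r) + ereal ((norm (z - y))\<^sup>2 / 2)"
      using Ry gamma by (intro add_right_mono ereal_mult_left_mono) auto
    finally have E: "\<gamma> * rp + (norm (z - xt1))\<^sup>2 / 2 \<le> \<gamma> * ((1 - t) * rp + t * r) + (norm (z - y))\<^sup>2 / 2"
      by simp
    have zy: "z - y = (z - xt1) + t *\<^sub>R d" by (simp add: y_def d_def algebra_simps)
    have "(norm (z - y))\<^sup>2 = (norm (z - xt1))\<^sup>2 + 2 * t * ((z - xt1) \<bullet> d) + t\<^sup>2 * (norm d)\<^sup>2"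
      unfolding zy power2_norm_eq_inner by (simp add: inner_add_left inner_add_right algebra_simps power2_eq_square inner_commute)
    with E have "t * (\<gamma> * rp) \<le> t * (\<gamma> * r + (z - xt1) \<bullet> d + t * ((norm d)\<^sup>2 / 2))"
      by (simp add: algebra_simps power2_eq_square)
    with t show "\<gamma> * rp \<le> \<gamma> * r + (z - xt1) \<bullet> d + t * ((norm d)\<^sup>2 / 2)"
      by simp
  qed simp
  have zx: "z - xt1 = - d - \<gamma> *\<^sub>R g" by (simp add: z_def d_def algebra_simps)
  have key2: "\<gamma> * rp \<le> \<gamma> * r - (norm d)\<^sup>2 - \<gamma> * (g \<bullet> d)"
    using key unfolding zx by (simp add: inner_diff_left power2_norm_eq_inner)
  have desc: "f xt1 \<le> f xt + grad xt \<bullet> d + L / 2 * (norm d)\<^sup>2"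
    using descent[OF grad Lip, of xt1 xt] by (simp add: d_def)
  define a where "a = grad xt - g"
  define b where "b = grad xt1 - grad xt"
  define p where "p = a - (1 / \<gamma>) *\<^sub>R d"
  have nb: "norm b \<le> L * norm d" using Lip[of xt1 xt] by (simp add: b_def d_def)
  have nb2: "(norm b)\<^sup>2 \<le> L\<^sup>2 * (norm d)\<^sup>2"
    using nb power_mono[OF nb norm_ge_zero, of 2] by (simp add: power_mult_distrib)
  have w: "grad xt1 + ((1 / \<gamma>) *\<^sub>R (xt - xt1) - g) = p + b"
    by (simp add: p_def a_def b_def d_def algebra_simps)
  have par: "(norm (p + b))\<^sup>2 \<le> 2 * (norm p)\<^sup>2 + 2 * (norm b)\<^sup>2"
  proof -
    have "0 \<le> (norm (p - b))\<^sup>2" by simp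
    thus ?thesis unfolding power2_norm_eq_inner
      by (simp add: inner_add_left inner_add_right inner_diff_left inner_diff_right inner_commute)
  qed
  have np: "(norm p)\<^sup>2 = (norm a)\<^sup>2 - 2 / \<gamma> * (a \<bullet> d) + (norm d)\<^sup>2 / \<gamma>\<^sup>2"
    unfolding p_def power2_norm_eq_inner
    by (simp add: inner_diff_left inner_diff_right inner_commute power2_eq_square algebra_simps)
  have ad: "a \<bullet> d = grad xt \<bullet> d - g \<bullet> d" by (simp add: a_def inner_diff_left)
  have rp': "rp \<le> r - (norm d)\<^sup>2 / \<gamma> - g \<bullet> d"
  proof -
    have "rp = (\<gamma> * rp) / \<gamma>" using gamma by simp
    also have "\<dots> \<le> (\<gamma> * r - (norm d)\<^sup>2 - \<gamma> * (g \<bullet> d)) / \<gamma>"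
      using key2 gamma by (intro divide_right_mono) auto
    also have "\<dots> = r - (norm d)\<^sup>2 / \<gamma> - g \<bullet> d" using gamma by (simp add: field_simps)
    finally show ?thesis .
  qed
  have g4: "\<gamma> / 4 * (norm (p + b))\<^sup>2 \<le> \<gamma> / 2 * (norm p)\<^sup>2 + \<gamma> / 2 * (L\<^sup>2 * (norm d)\<^sup>2)"
  proof -
    have "\<gamma> / 4 * (norm (p + b))\<^sup>2 \<le> \<gamma> / 4 * (2 * (norm p)\<^sup>2 + 2 * (L\<^sup>2 * (norm d)\<^sup>2))"
      using par nb2 gamma by (intro mult_left_mono) auto
    thus ?thesis by (simp add: algebra_simps)
  qed
  have gp: "\<gamma> / 2 * (norm p)\<^sup>2 = \<gamma> / 2 * (norm a)\<^sup>2 - a \<bullet> d + (norm d)\<^sup>2 / (2 * \<gamma>)"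
    unfolding np using gamma by (simp add: field_simps power2_eq_square)
  show ?thesis
    unfolding w rp r real_of_ereal.simps
    using desc rp' g4 gp ad
    by (simp add: d_def[symmetric] a_def[symmetric] algebra_simps add_divide_distrib diff_divide_distrib)
qed

end
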